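(* Let $L$ be a positive integer and let $a_1\le\dots\le a_L$ and $b_1\le\dots\le b_L$ be numbers in $[0,1]$. Define $$\Phi(t)=\sum_{l=1}^L\mathbf{1}_{[0,b_l]}(t)+\sum_{l=1}^L\mathbf{1}_{[a_l,1]}(t),\qquad A_{\ge n}=\Phi^{-1}([n,2L])\quad(1\le n\le 2L).$$ Then: (i) each set $A_{\ge n}$ is a union of at most $L$ intervals, where intervals are understood cyclically, i.e. as arcs of $[0,1]$ with $0$ and $1$ identified; (ii) if for some $n$ the set $A_{\ge n}$ cannot be written as a union of fewer than $L$ such cyclic intervals, then the sequences interlace, i.e. either $a_1\le b_1\le a_2\le b_2\le\dots\le a_L\le b_L$ or $b_1\le a_1\le b_2\le a_2\le\dots\le b_L\le a_L$. *)

theory Defs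
  imports "HOL-Analysis.Analysis"
begin

text \<open>Cyclic interval (arc) of [0,1] with 0 and 1 identified: a subset of [0,1] that is
  either an ordinary interval, or a wrap-around arc, i.e. the union of an interval
  containing 0 and an interval containing 1.\<close>
definition cyclic_interval :: "real set \<Rightarrow> bool" where
  "cyclic_interval S \<longleftrightarrow> S \<subseteq> {0..1} \<and>
     (is_interval S \<or>
      (\<exists>I J. is_interval I \<and> is_interval J \<and> 0 \<in> I \<and> 1 \<in> J \<and> S = I \<union> J))"

definition union_of_cyclic_intervals :: "nat \<Rightarrow> real set \<Rightarrow> bool" where
  "union_of_cyclic_intervals k S \<longleftrightarrow>
     (\<exists>F. finite F \<and> card F \<le> k \<and> (\<forall>I\<in>F. cyclic_interval I) \<and> S = \<Union>F)"

definition Phi :: "nat \<Rightarrow> (nat \<Rightarrow> real) \<Rightarrow> (nat \<Rightarrow> real) \<Rightarrow> real \<Rightarrow> real" where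
  "Phi L a b t = (\<Sum>l=1..L. indicator {0..b l} t) + (\<Sum>l=1..L. indicator {a l..1} t)"

definition A_ge :: "nat \<Rightarrow> (nat \<Rightarrow> real) \<Rightarrow> (nat \<Rightarrow> real) \<Rightarrow> nat \<Rightarrow> real set" where
  "A_ge L a b n = {t \<in> {0..1}. real n \<le> Phi L a b t \<and> Phi L a b t \<le> real (2 * L)}"

definition interlace :: "nat \<Rightarrow> (nat \<Rightarrow> real) \<Rightarrow> (nat \<Rightarrow> real) \<Rightarrow> bool" where
  "interlace L a b \<longleftrightarrow>
     ((\<forall>l\<in>{1..L}. a l \<le> b l) \<and> (\<forall>l\<in>{1..<L}. b l \<le> a (Suc l))) \<or>
     ((\<forall>l\<in>{1..L}. b l \<le> a l) \<and> (\<forall>l\<in>{1..<L}. a l \<le> b (Suc l)))"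

end

theory Submission
  imports Defs
begin

lemma mono_aux:
  fixes c :: "nat \<Rightarrow> real"
  assumes "\<And>l. l \<in> {1..<L} \<Longrightarrow> c l \<le> c (Suc l)"
  shows "1 \<le> l \<Longrightarrow> l \<le> m \<Longrightarrow> m \<le> L \<Longrightarrow> c l \<le> c m"
proof (induction m)
  case 0 then show ?case by simp
next
  case (Suc m)
  show ?case
  proof (cases "l = Suc m")
    case True then show ?thesis by simp
  next
    case False
    then have "l \<le> m" using Suc.prems by simp
    then have "c l \<le> c m" using Suc by simp
    also have "c m \<le> c (Suc m)" using assms[of m] Suc.prems \<open>l \<le> m\<close> by simp
    finally show ?thesis .
  qed
qed

lemma sum_ind_card:
  assumes "finite A"
  shows "(\<Sum>l\<in>A. indicator (S l) t) = real (card {l\<in>A. t \<in> S l})"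
proof -
  have "(\<Sum>l\<in>A. indicator (S l) t) = (\<Sum>l\<in>A. of_bool (t \<in> S l) :: real)"
    by (simp add: indicator_def)
  also have "\<dots> = real (card (A \<inter> {l. t \<in> S l}))" using assms by simp
  also have "A \<inter> {l. t \<in> S l} = {l\<in>A. t \<in> S l}" by auto
  finally show ?thesis .
qed

lemma cardB:
  fixes b :: "nat \<Rightarrow> real"
  assumes mono: "\<And>l. l\<in>{1..<L} \<Longrightarrow> b l \<le> b (Suc l)" and j: "1 \<le> j" "j \<le> L"
  shows "j \<le> card {l\<in>{1..L}. t \<le> b l} \<longleftrightarrow> t \<le> b (L+1-j)"
proof
  assume h: "j \<le> card {l\<in>{1..L}. t \<le> b l}"
  show "t \<le> b (L+1-j)"
  proof (rule ccontr)
    assume c: "\<not> t \<le> b (L+1-j)"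
    have "{l\<in>{1..L}. t \<le> b l} \<subseteq> {L+2-j..L}"
    proof
      fix l assume l: "l \<in> {l\<in>{1..L}. t \<le> b l}"
      show "l \<in> {L+2-j..L}"
      proof (rule ccontr)
        assume "l \<notin> {L+2-j..L}"
        then have "l \<le> L+1-j" using l j by auto
        then have "b l \<le> b (L+1-j)" using mono_aux[where L=L and c=b, OF mono, of l "L+1-j"] l j by auto
        then show False using l c by auto
      qed
    qed
    then have "card {l\<in>{1..L}. t \<le> b l} \<le> card {L+2-j..L}" by (rule card_mono[rotated]) auto
    also have "\<dots> = j - 1" using j by simp
    finally show False using h j by simp
  qed
next
  assume h: "t \<le> b (L+1-j)"
  have "{L+1-j..L} \<subseteq> {l\<in>{1..L}. t \<le> b l}"
  proof
    fix l assume l: "l \<in> {L+1-j..L}"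
    then have "b (L+1-j) \<le> b l" using mono_aux[where L=L and c=b, OF mono, of "L+1-j" l] j by auto
    then show "l \<in> {l\<in>{1..L}. t \<le> b l}" using l h j by auto
  qed
  then have "card {L+1-j..L} \<le> card {l\<in>{1..L}. t \<le> b l}" by (rule card_mono[rotated]) auto
  then show "j \<le> card {l\<in>{1..L}. t \<le> b l}" using j by simp
qed

lemma cardA:
  fixes a :: "nat \<Rightarrow> real"
  assumes mono: "\<And>l. l\<in>{1..<L} \<Longrightarrow> a l \<le> a (Suc l)" and i: "1 \<le> i" "i \<le> L"
  shows "i \<le> card {l\<in>{1..L}. a l \<le> t} \<longleftrightarrow> a i \<le> t"
proof
  assume h: "i \<le> card {l\<in>{1..L}. a l \<le> t}"
  show "a i \<le> t"
  proof (rule ccontr)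
    assume c: "\<not> a i \<le> t"
    have "{l\<in>{1..L}. a l \<le> t} \<subseteq> {1..<i}"
    proof
      fix l assume l: "l \<in> {l\<in>{1..L}. a l \<le> t}"
      show "l \<in> {1..<i}"
      proof (rule ccontr)
        assume "l \<notin> {1..<i}"
        then have "i \<le> l" using l by auto
        then have "a i \<le> a l" using mono_aux[where L=L and c=a, OF mono, of i l] l i by auto
        then show False using l c by auto
      qed
    qed
    then have "card {l\<in>{1..L}. a l \<le> t} \<le> card {1..<i}" by (rule card_mono[rotated]) auto
    also have "\<dots> = i - 1" by simp
    finally show False using h i by simp
  qed
next
  assume h: "a i \<le> t"
  have "{1..i} \<subseteq> {l\<in>{1..L}. a l \<le> t}"
  proof
    fix l assume l: "l \<in> {1..i}"
    then have "a l \<le> a i" using mono_aux[where L=L and c=a, OF mono, of l i] i by auto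
    then show "l \<in> {l\<in>{1..L}. a l \<le> t}" using l h i by auto
  qed
  then have "card {1..i} \<le> card {l\<in>{1..L}. a l \<le> t}" by (rule card_mono[rotated]) auto
  then show "i \<le> card {l\<in>{1..L}. a l \<le> t}" by simp
qed

lemma A_ge_mem:
  fixes a b :: "nat \<Rightarrow> real"
  assumes ma: "\<And>l. l\<in>{1..<L} \<Longrightarrow> a l \<le> a (Suc l)"
    and mb: "\<And>l. l\<in>{1..<L} \<Longrightarrow> b l \<le> b (Suc l)"
  shows "t \<in> A_ge L a b n \<longleftrightarrow> t \<in> {0..1} \<and> (\<exists>i. i \<le> L \<and> i \<le> n \<and> n - i \<le> L \<and>
      (i = 0 \<or> a i \<le> t) \<and> (n - i = 0 \<or> t \<le> b (L+1-(n-i))))"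
proof (cases "t \<in> {0..1}")
  case False then show ?thesis by (auto simp add: A_ge_def)
next
  case True
  define cb where "cb = card {l\<in>{1..L}. t \<le> b l}"
  define ca where "ca = card {l\<in>{1..L}. a l \<le> t}"
  have cbL: "cb \<le> L" unfolding cb_def
    using card_mono[of "{1..L}" "{l\<in>{1..L}. t \<le> b l}"] by fastforce
  have caL: "ca \<le> L" unfolding ca_def
    using card_mono[of "{1..L}" "{l\<in>{1..L}. a l \<le> t}"] by fastforce
  have s1: "{l\<in>{1..L}. t \<in> {0..b l}} = {l\<in>{1..L}. t \<le> b l}" using True by auto
  have s2: "{l\<in>{1..L}. t \<in> {a l..1}} = {l\<in>{1..L}. a l \<le> t}" using True by auto
  have phi: "Phi L a b t = real cb + real ca"
    unfolding Phi_def sum_ind_card[OF finite_atLeastAtMost] s1 s2 cb_def ca_def ..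
  have mem: "t \<in> A_ge L a b n \<longleftrightarrow> n \<le> cb + ca"
  proof -
    have "real n \<le> real cb + real ca \<longleftrightarrow> n \<le> cb+ca" by (metis of_nat_add of_nat_le_iff)
    moreover have "real cb + real ca \<le> real (2*L)" using cbL caL by simp
    ultimately show ?thesis using True by (auto simp add: A_ge_def phi)
  qed
  have eA: "i \<le> L \<Longrightarrow> (i \<le> ca \<longleftrightarrow> (i = 0 \<or> a i \<le> t))" for i
    using cardA[where L=L and a=a, OF ma, of i t] unfolding ca_def by (cases "i = 0") auto
  have eB: "j \<le> L \<Longrightarrow> (j \<le> cb \<longleftrightarrow> (j = 0 \<or> t \<le> b (L+1-j)))" for j
    using cardB[where L=L and b=b, OF mb, of j t] unfolding cb_def by (cases "j = 0") auto
  show ?thesis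
  proof
    assume "t \<in> A_ge L a b n"
    then have h: "n \<le> cb + ca" using mem by simp
    define i where "i = min ca n"
    have "i \<le> L" "i \<le> n" "n - i \<le> L" "i \<le> ca" "n - i \<le> cb"
      using h caL cbL unfolding i_def by auto
    then show "t \<in> {0..1} \<and> (\<exists>i. i \<le> L \<and> i \<le> n \<and> n - i \<le> L \<and>
      (i = 0 \<or> a i \<le> t) \<and> (n - i = 0 \<or> t \<le> b (L+1-(n-i))))"
      using True eA[of i] eB[of "n-i"] by blast
  next
    assume "t \<in> {0..1} \<and> (\<exists>i. i \<le> L \<and> i \<le> n \<and> n - i \<le> L \<and>
      (i = 0 \<or> a i \<le> t) \<and> (n - i = 0 \<or> t \<le> b (L+1-(n-i))))"
    then obtain i where "i \<le> L" "i \<le> n" "n - i \<le> L"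
      "(i = 0 \<or> a i \<le> t)" "(n - i = 0 \<or> t \<le> b (L+1-(n-i)))" by blast
    then have "i \<le> ca" "n - i \<le> cb" using eA eB by auto
    then show "t \<in> A_ge L a b n" using mem by simp
  qed
qed

lemma union_from_family:
  assumes "finite K" "\<forall>i\<in>K. cyclic_interval (X i)" "card K \<le> k" "S = \<Union>(X ` K)"
  shows "union_of_cyclic_intervals k S"
  unfolding union_of_cyclic_intervals_def
  apply (rule exI[of _ "X ` K"])
  using assms card_image_le[OF assms(1), of X] by auto

lemma merge_family:
  assumes "finite K" "\<forall>i\<in>K. cyclic_interval (X i)" "p \<in> K" "q \<in> K" "p \<noteq> q"
    "cyclic_interval (X p \<union> X q)" "card K \<le> k + 1" "S = \<Union>(X ` K)"
  shows "union_of_cyclic_intervals k S"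
  unfolding union_of_cyclic_intervals_def
proof (rule exI[of _ "insert (X p \<union> X q) (X ` (K - {p,q}))"], intro conjI)
  have c2: "card (K - {p,q}) = card K - 2" using assms by (simp add: card_Diff_subset)
  have "card K \<ge> 2"
  proof -
    have "{p,q} \<subseteq> K" using assms by auto
    then have "card {p,q} \<le> card K" using assms(1) by (rule card_mono[rotated])
    then show ?thesis using assms by simp
  qed
  have "card (insert (X p \<union> X q) (X ` (K - {p,q}))) \<le> Suc (card (X ` (K - {p,q})))"
    by (simp add: card_insert_le_m1)
  also have "\<dots> \<le> Suc (card (K - {p,q}))" using card_image_le[of "K - {p,q}" X] assms(1) by simp
  finally show "card (insert (X p \<union> X q) (X ` (K - {p,q}))) \<le> k"
    using c2 assms \<open>card K \<ge> 2\<close> by linarith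
  show "finite (insert (X p \<union> X q) (X ` (K - {p,q})))" using assms by simp
  show "\<forall>I\<in>insert (X p \<union> X q) (X ` (K - {p,q})). cyclic_interval I" using assms by auto
  show "S = \<Union>(insert (X p \<union> X q) (X ` (K - {p,q})))" using assms by auto
qed

lemma cyc_cc: "0 \<le> x \<Longrightarrow> y \<le> 1 \<Longrightarrow> cyclic_interval {x..(y::real)}"
  unfolding cyclic_interval_def by (auto simp: is_interval_cc)

lemma cyc_wrap: "0 \<le> x \<Longrightarrow> y \<le> (1::real) \<Longrightarrow> x \<le> 1 \<Longrightarrow> 0 \<le> y \<Longrightarrow>
   cyclic_interval ({0..x} \<union> {y..1})"
  unfolding cyclic_interval_def
  by (intro conjI disjI2 exI[of _ "{0..x}"] exI[of _ "{y..1}"]) (auto simp: is_interval_cc)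

lemma un2: "x \<le> u \<Longrightarrow> y \<le> v \<Longrightarrow> u \<le> y \<Longrightarrow> {x..y} \<union> {u..v} = {x..(v::real)}"
  by auto

definition Yf :: "nat \<Rightarrow> (nat\<Rightarrow>real) \<Rightarrow> (nat\<Rightarrow>real) \<Rightarrow> nat \<Rightarrow> nat \<Rightarrow> real set" where
  "Yf L a b n i = (if i = n then {0..b(L+1-n)} \<union> {a n..1} else {a i..b(L+1-(n-i))})"

definition Zf :: "nat \<Rightarrow> (nat\<Rightarrow>real) \<Rightarrow> (nat\<Rightarrow>real) \<Rightarrow> nat \<Rightarrow> nat \<Rightarrow> real set" where
  "Zf L a b n i = {a i..b(L+1-(n-i))}"

locale thm6_setup =
  fixes L :: nat and a b :: "nat \<Rightarrow> real"
  assumes ha: "\<And>l. l \<in> {1..L} \<Longrightarrow> 0 \<le> a l \<and> a l \<le> 1"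
    and hb: "\<And>l. l \<in> {1..L} \<Longrightarrow> 0 \<le> b l \<and> b l \<le> 1"
    and ma: "\<And>l. l \<in> {1..<L} \<Longrightarrow> a l \<le> a (Suc l)"
    and mb: "\<And>l. l \<in> {1..<L} \<Longrightarrow> b l \<le> b (Suc l)"

context thm6_setup
begin

lemma Y_cyc: "1 \<le> n \<Longrightarrow> n \<le> L \<Longrightarrow> i \<in> {1..n} \<Longrightarrow> cyclic_interval (Yf L a b n i)"
proof -
  assume n: "1 \<le> n" "n \<le> L" and i: "i \<in> {1..n}"
  show ?thesis
  proof (cases "i = n")
    case True
    have i1: "L+1-n \<in> {1..L}" "n \<in> {1..L}" using n by auto
    have "Yf L a b n i = {0..b(L+1-n)} \<union> {a n..1}" using True by (simp add: Yf_def)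
    then show ?thesis using ha[OF i1(2)] hb[OF i1(1)]
      by (simp del: atLeastAtMost_iff add: cyc_wrap)
  next
    case False
    have i1: "L+1-(n-i) \<in> {1..L}" "i \<in> {1..L}" using n i False by auto
    have "Yf L a b n i = {a i..b(L+1-(n-i))}" using False by (simp add: Yf_def)
    then show ?thesis using ha[OF i1(2)] hb[OF i1(1)] by (simp add: cyc_cc)
  qed
qed

lemma Z_cyc: "L < n \<Longrightarrow> n \<le> 2*L \<Longrightarrow> i \<in> {n-L..L} \<Longrightarrow> cyclic_interval (Zf L a b n i)"
proof -
  assume n: "L < n" "n \<le> 2*L" and i: "i \<in> {n-L..L}"
  have i1: "L+1-(n-i) \<in> {1..L}" "i \<in> {1..L}" using n i by auto
  show ?thesis unfolding Zf_def using ha[OF i1(2)] hb[OF i1(1)] by (simp add: cyc_cc)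
qed

lemma Y_eq: "1 \<le> n \<Longrightarrow> n \<le> L \<Longrightarrow> A_ge L a b n = \<Union>(Yf L a b n ` {1..n})"
proof -
  assume n: "1 \<le> n" "n \<le> L"
  show ?thesis
  proof (rule set_eqI)
    fix t
    show "t \<in> A_ge L a b n \<longleftrightarrow> t \<in> \<Union>(Yf L a b n ` {1..n})"
    proof
      assume "t \<in> A_ge L a b n"
      then obtain i where t: "t \<in> {0..1}" and i: "i \<le> L" "i \<le> n" "n - i \<le> L"
        "(i = 0 \<or> a i \<le> t)" "(n - i = 0 \<or> t \<le> b (L+1-(n-i)))"
        using A_ge_mem[where L=L and a=a and b=b, OF ma mb] by blast
      show "t \<in> \<Union>(Yf L a b n ` {1..n})"
      proof (cases "i = 0 \<or> i = n")
        case True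
        then have "t \<in> Yf L a b n n" using t i n unfolding Yf_def by auto
        then show ?thesis using n by auto
      next
        case False
        then have "t \<in> Yf L a b n i" using t i n unfolding Yf_def by auto
        then show ?thesis using n i False by auto
      qed
    next
      assume "t \<in> \<Union>(Yf L a b n ` {1..n})"
      then obtain i where i: "i \<in> {1..n}" and t: "t \<in> Yf L a b n i" by auto
      have "t \<in> {0..1} \<and> (\<exists>i. i \<le> L \<and> i \<le> n \<and> n - i \<le> L \<and>
        (i = 0 \<or> a i \<le> t) \<and> (n - i = 0 \<or> t \<le> b (L+1-(n-i))))"
      proof (cases "i = n")
        case True
        then have "t \<in> {0..b(L+1-n)} \<or> t \<in> {a n..1}" using t unfolding Yf_def by auto
        then show ?thesis
        proof
          assume h: "t \<in> {0..b(L+1-n)}"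
          have i1: "L+1-n \<in> {1..L}" using n by auto
          have "b (L+1-n) \<le> 1" using hb[OF i1] by auto
          then show ?thesis using h n by (intro conjI exI[of _ 0]) auto
        next
          assume h: "t \<in> {a n..1}"
          have "0 \<le> a n" using ha[of n] n by auto
          then show ?thesis using h n by (intro conjI exI[of _ n]) auto
        qed
      next
        case False
        then have h: "t \<in> {a i..b(L+1-(n-i))}" using t unfolding Yf_def by auto
        have i1: "L+1-(n-i) \<in> {1..L}" "i \<in> {1..L}" using n i False by auto
        have "0 \<le> a i" using ha[OF i1(2)] by auto
        moreover have "b (L+1-(n-i)) \<le> 1" using hb[OF i1(1)] by auto
        ultimately show ?thesis using h n i False by (intro conjI exI[of _ i]) auto
      qed
      then show "t \<in> A_ge L a b n"
        using A_ge_mem[where L=L and a=a and b=b, OF ma mb] by blast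
    qed
  qed
qed

lemma Z_eq: "L < n \<Longrightarrow> n \<le> 2*L \<Longrightarrow> A_ge L a b n = \<Union>(Zf L a b n ` {n-L..L})"
proof -
  assume n: "L < n" "n \<le> 2*L"
  show ?thesis
  proof (rule set_eqI)
    fix t
    show "t \<in> A_ge L a b n \<longleftrightarrow> t \<in> \<Union>(Zf L a b n ` {n-L..L})"
    proof
      assume "t \<in> A_ge L a b n"
      then obtain i where t: "t \<in> {0..1}" and i: "i \<le> L" "i \<le> n" "n - i \<le> L"
        "(i = 0 \<or> a i \<le> t)" "(n - i = 0 \<or> t \<le> b (L+1-(n-i)))"
        using A_ge_mem[where L=L and a=a and b=b, OF ma mb] by blast
      have "t \<in> Zf L a b n i" using t i n unfolding Zf_def by auto
      then show "t \<in> \<Union>(Zf L a b n ` {n-L..L})" using i n by auto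
    next
      assume "t \<in> \<Union>(Zf L a b n ` {n-L..L})"
      then obtain i where i: "i \<in> {n-L..L}" and t: "t \<in> Zf L a b n i" by auto
      have h: "t \<in> {a i..b(L+1-(n-i))}" using t unfolding Zf_def by auto
      have i1: "L+1-(n-i) \<in> {1..L}" "i \<in> {1..L}" using n i by auto
      have "0 \<le> a i" using ha[OF i1(2)] by auto
      moreover have "b (L+1-(n-i)) \<le> 1" using hb[OF i1(1)] by auto
      ultimately have "t \<in> {0..1} \<and> (\<exists>i. i \<le> L \<and> i \<le> n \<and> n - i \<le> L \<and>
        (i = 0 \<or> a i \<le> t) \<and> (n - i = 0 \<or> t \<le> b (L+1-(n-i))))"
        using h n i by (intro conjI exI[of _ i]) auto
      then show "t \<in> A_ge L a b n"
        using A_ge_mem[where L=L and a=a and b=b, OF ma mb] by blast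
    qed
  qed
qed

end


theorem mainTheorem6:
  fixes L :: nat and a b :: "nat \<Rightarrow> real"
  assumes "L \<ge> 1"
    and "\<And>l. l \<in> {1..L} \<Longrightarrow> 0 \<le> a l \<and> a l \<le> 1"
    and "\<And>l. l \<in> {1..L} \<Longrightarrow> 0 \<le> b l \<and> b l \<le> 1"
    and "\<And>l. l \<in> {1..<L} \<Longrightarrow> a l \<le> a (Suc l)"
    and "\<And>l. l \<in> {1..<L} \<Longrightarrow> b l \<le> b (Suc l)"
  shows "(\<forall>n\<in>{1..2*L}. union_of_cyclic_intervals L (A_ge L a b n))
       \<and> ((\<exists>n\<in>{1..2*L}. \<not> union_of_cyclic_intervals (L - 1) (A_ge L a b n))
            \<longrightarrow> interlace L a b)"
proof -
  note ha = assms(2) and hb = assms(3)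
  interpret S: thm6_setup L a b using assms by unfold_locales auto
  note YE = S.Y_eq
  note ZE = S.Z_eq
  note YC = S.Y_cyc
  note ZC = S.Z_cyc
  have am: "a l \<le> a m" if "1 \<le> l" "l \<le> m" "m \<le> L" for l m
    using mono_aux[where L=L and c=a, OF assms(4)] that by blast
  have bm: "b l \<le> b m" if "1 \<le> l" "l \<le> m" "m \<le> L" for l m
    using mono_aux[where L=L and c=b, OF assms(5)] that by blast
  have lowY: "union_of_cyclic_intervals k (A_ge L a b n)"
    if "1 \<le> n" "n \<le> L" "n \<le> k" for n k
  proof -
    have c: "\<forall>i\<in>{1..n}. cyclic_interval (Yf L a b n i)" using YC[OF that(1,2)] by blast
    show ?thesis using union_from_family[OF finite_atLeastAtMost c _ YE[OF that(1,2)]] that by simp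
  qed
  have highZ: "union_of_cyclic_intervals k (A_ge L a b n)"
    if "L < n" "n \<le> 2*L" "L + 1 - (n - L) \<le> k" for n k
  proof -
    have c: "\<forall>i\<in>{n-L..L}. cyclic_interval (Zf L a b n i)" using ZC[OF that(1,2)] by blast
    show ?thesis using union_from_family[OF finite_atLeastAtMost c _ ZE[OF that(1,2)]] that by simp
  qed
  have part1: "\<forall>n\<in>{1..2*L}. union_of_cyclic_intervals L (A_ge L a b n)"
  proof
    fix n assume n: "n \<in> {1..2*L}"
    show "union_of_cyclic_intervals L (A_ge L a b n)"
    proof (cases "n \<le> L")
      case True then show ?thesis using n lowY by auto
    next
      case False then show ?thesis using n highZ by auto
    qed
  qed
  have part2: "interlace L a b"
    if ex: "\<exists>n\<in>{1..2*L}. \<not> union_of_cyclic_intervals (L - 1) (A_ge L a b n)"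
  proof (rule ccontr)
    assume ni: "\<not> interlace L a b"
    show False
    proof (cases "L = 1")
      case True
      then show False using ni unfolding interlace_def by auto
    next
      case False
      then have L2: "L \<ge> 2" using assms(1) by simp
      obtain n where n: "n \<in> {1..2*L}" and nu: "\<not> union_of_cyclic_intervals (L - 1) (A_ge L a b n)"
        using ex by blast
      consider "n \<le> L - 1" | "n = L" | "n = L + 1" | "n \<ge> L + 2" by linarith
      then show False
      proof cases
        case 1
        have "n \<le> L" "1 \<le> n" using 1 n by auto
        then show False using nu lowY[of n "L-1"] 1 by blast
      next
        case 4
        have "L < n" "n \<le> 2*L" "L + 1 - (n - L) \<le> L - 1" using 4 n L2 by auto
        then show False using nu highZ[of n "L-1"] by blast
      next
        case 2
        note nL = 2
        have KY: "A_ge L a b L = \<Union>(Yf L a b L ` {1..L})" using YE L2 by auto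
        have cY: "\<forall>i\<in>{1..L}. cyclic_interval (Yf L a b L i)" using YC L2 by auto
        have Ylow: "Yf L a b L i = {a i..b (Suc i)}" if "i \<in> {1..<L}" for i
          using that by (simp add: Yf_def)
        have YL: "Yf L a b L L = {0..b 1} \<union> {a L..1}" by (simp add: Yf_def)
        have mrg: "union_of_cyclic_intervals (L - 1) (A_ge L a b L)"
          if "p \<in> {1..L}" "q \<in> {1..L}" "p \<noteq> q" "cyclic_interval (Yf L a b L p \<union> Yf L a b L q)" for p q
          using that L2 by (intro merge_family[where K="{1..L}" and X="Yf L a b L" and p=p and q=q, OF _ cY _ _ _ _ _ KY]) auto
        from ni have "(\<exists>l\<in>{1..L}. a l < b l) \<or> (\<exists>l\<in>{1..<L}. b (Suc l) < a l)"
          unfolding interlace_def by (auto simp: not_le)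
        then show False
        proof
          assume "\<exists>l\<in>{1..<L}. b (Suc l) < a l"
          then obtain l where l: "l \<in> {1..<L}" "b (Suc l) < a l" by blast
          have "Yf L a b L l \<union> Yf L a b L L = Yf L a b L L" using Ylow[OF l(1)] l(2) by auto
          then have "cyclic_interval (Yf L a b L l \<union> Yf L a b L L)" using cY L2 by auto
          then show False using mrg[of l L] l n nu 2 by auto
        next
          assume "\<exists>l\<in>{1..L}. a l < b l"
          then obtain l where l: "l \<in> {1..L}" "a l < b l" by blast
          consider "l = 1" | "l = L" "l \<noteq> 1" | "1 < l" "l < L" using l by fastforce
          then show False
          proof cases
            case 1
            have e1: "{0..b 1} \<union> {a 1..b 2} = {0..b 2}"
              using ha[of 1] bm[of 1 2] l 1 L2 by (intro un2) auto
            have "Yf L a b L 1 \<union> Yf L a b L L = {0..b 2} \<union> {a L..1}"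
            proof -
              have Y1: "Yf L a b L 1 = {a 1..b 2}" using L2 by (simp add: Yf_def numeral_2_eq_2)
              show ?thesis unfolding Y1 YL using e1 by blast
            qed
            moreover have "cyclic_interval ({0..b 2} \<union> {a L..1})"
              using ha[of L] hb[of 2] L2 by (intro cyc_wrap) auto
            ultimately show False using mrg[of 1 L] L2 n nu 2 by auto
          next
            case 2
            have e1: "{a (L-1)..b L} \<union> {a L..1} = {a (L-1)..1}"
              using am[of "L-1" L] hb[of L] l 2 L2 by (intro un2) auto
            have "Yf L a b L (L-1) \<union> Yf L a b L L = {0..b 1} \<union> {a (L-1)..1}"
              using Ylow[of "L-1"] L2 YL e1 by auto
            moreover have "cyclic_interval ({0..b 1} \<union> {a (L-1)..1})"
              using ha[of "L-1"] hb[of 1] L2 by (intro cyc_wrap) auto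
            ultimately show False using mrg[of "L-1" L] L2 n nu nL by auto
          next
            case 3
            have e1: "{a (l-1)..b l} \<union> {a l..b (Suc l)} = {a (l-1)..b (Suc l)}"
              using am[of "l-1" l] bm[of l "Suc l"] l 3 by (intro un2) auto
            have "Yf L a b L (l-1) \<union> Yf L a b L l = {a (l-1)..b (Suc l)}"
            proof -
              have m1: "l-1 \<in> {1..<L}" "l \<in> {1..<L}" using 3 by auto
              have "Yf L a b L (l-1) = {a (l-1)..b l}" using Ylow[OF m1(1)] 3 by simp
              then show ?thesis using Ylow[OF m1(2)] e1 by simp
            qed
            moreover have "cyclic_interval {a (l-1)..b (Suc l)}"
            proof -
              have "l-1 \<in> {1..L}" "Suc l \<in> {1..L}" using 3 by auto
              then show ?thesis using ha hb by (intro cyc_cc) auto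
            qed
            ultimately have cy: "cyclic_interval (Yf L a b L (l-1) \<union> Yf L a b L l)" by simp
            have m: "l-1 \<in> {1..L}" "l \<in> {1..L}" "l-1 \<noteq> l" using 3 by auto
            show False using mrg[OF m cy] nu nL by simp
          qed
        qed
      next
        case 3
        have KZ: "A_ge L a b (L+1) = \<Union>(Zf L a b (L+1) ` {1..L})" using ZE[of "L+1"] L2 by auto
        have Zi: "Zf L a b (L+1) i = {a i..b i}" if "i \<in> {1..L}" for i
          using that by (simp add: Zf_def)
        have cZ: "\<forall>i\<in>{1..L}. cyclic_interval (Zf L a b (L+1) i)" using ZC[of "L+1"] L2 by auto
        have mrg: "union_of_cyclic_intervals (L - 1) (A_ge L a b (L+1))"
          if "p \<in> {1..L}" "q \<in> {1..L}" "p \<noteq> q" "cyclic_interval (Zf L a b (L+1) p \<union> Zf L a b (L+1) q)" for p q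
          using that L2 by (intro merge_family[where K="{1..L}" and X="Zf L a b (L+1)" and p=p and q=q, OF _ cZ _ _ _ _ _ KZ]) auto
        from ni have "(\<exists>l\<in>{1..L}. b l < a l) \<or> (\<exists>l\<in>{1..<L}. a (Suc l) < b l)"
          unfolding interlace_def by (auto simp: not_le)
        then show False
        proof
          assume "\<exists>l\<in>{1..L}. b l < a l"
          then obtain l where l: "l \<in> {1..L}" "b l < a l" by blast
          define q :: nat where "q = (if l = 1 then 2 else 1)"
          have q: "q \<in> {1..L}" "q \<noteq> l" using L2 l unfolding q_def by auto
          have "Zf L a b (L+1) l \<union> Zf L a b (L+1) q = Zf L a b (L+1) q" using Zi[OF l(1)] l(2) by auto
          then have "cyclic_interval (Zf L a b (L+1) l \<union> Zf L a b (L+1) q)" using cZ q by auto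
          then show False using mrg[of l q] l q n nu 3 by auto
        next
          assume "\<exists>l\<in>{1..<L}. a (Suc l) < b l"
          then obtain l where l: "l \<in> {1..<L}" "a (Suc l) < b l" by blast
          have e1: "{a l..b l} \<union> {a (Suc l)..b (Suc l)} = {a l..b (Suc l)}"
            using am[of l "Suc l"] bm[of l "Suc l"] l by (intro un2) auto
          have "Zf L a b (L+1) l \<union> Zf L a b (L+1) (Suc l) = {a l..b (Suc l)}"
            using Zi[of l] Zi[of "Suc l"] l e1 by auto
          moreover have "cyclic_interval {a l..b (Suc l)}"
            using ha[of l] hb[of "Suc l"] l by (intro cyc_cc) auto
          ultimately show False using mrg[of l "Suc l"] l n nu 3 by auto
        qed
      qed
    qed
  qed
  show ?thesis using part1 part2 by blast
qed

end
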